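(* Let $\mathcal{I}$ be finite and, for $\mathbf{Q}\in B(\mathcal{L})$, let $p^{MU}(\mathbf{Q})=\log|\mathcal{P}_{\mathbf{Q}}|$ (the min-entropy information gain under the uniform distribution on $\mathcal{I}$). Then $p^{MU}$ is an arbitrage-free instance-independent pricing function.
   Context: $\mathcal{I}$ is a set of database instances; queries are deterministic functions on $\mathcal{I}$; a query bundle is a finite tuple of queries from a language $\mathcal{L}$, evaluated componentwise; $B(\mathcal{L})$ is the set of bundles, closed under concatenation $\mathbf{Q}_1,\mathbf{Q}_2$. $\mathcal{P}_{\mathbf{Q}}$ is the partition of $\mathcal{I}$ into the equivalence classes of $D\sim D'\iff\mathbf{Q}(D)=\mathbf{Q}(D')$, and $|\mathcal{P}_{\mathbf{Q}}|$ is its number of blocks. An instance-independent pricing function $p$ is arbitrage-free if (i) whenever for all $D',D''\in\mathcal{I}$, $\mathbf{Q}_2(D')=\mathbf{Q}_2(D'')$ implies $\mathbf{Q}_1(D')=\mathbf{Q}_1(D'')$, we have $p(\mathbf{Q}_2)\ge p(\mathbf{Q}_1)$; and (ii) $p(\mathbf{Q}_1,\mathbf{Q}_2)\le p(\mathbf{Q}_1)+p(\mathbf{Q}_2)$ for all bundles. *)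

theory Defs
  imports Complex_Main
begin

text \<open>A query language L is a set of queries; a bundle is a finite tuple (list)
  of queries from L, i.e. an element of lists L; concatenation is append.\<close>

definition bundle_eval :: "('i \<Rightarrow> 'o) list \<Rightarrow> 'i \<Rightarrow> 'o list" where
  "bundle_eval Q D = map (\<lambda>q. q D) Q"

definition query_partition :: "'i set \<Rightarrow> ('i \<Rightarrow> 'o) list \<Rightarrow> 'i set set" where
  "query_partition I Q =
     I // {(D, D'). D \<in> I \<and> D' \<in> I \<and> bundle_eval Q D = bundle_eval Q D'}"

text \<open>An instance-independent pricing function assigns a price to each bundle.
  Arbitrage-freeness: (i) information-monotonicity, (ii) subadditivity.\<close>
definition arbitrage_free ::
  "'i set \<Rightarrow> ('i \<Rightarrow> 'o) set \<Rightarrow> (('i \<Rightarrow> 'o) list \<Rightarrow> real) \<Rightarrow> bool" where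
  "arbitrage_free I L p \<longleftrightarrow>
     (\<forall>Q1\<in>lists L. \<forall>Q2\<in>lists L.
        (\<forall>D'\<in>I. \<forall>D''\<in>I. bundle_eval Q2 D' = bundle_eval Q2 D''
                            \<longrightarrow> bundle_eval Q1 D' = bundle_eval Q1 D'')
        \<longrightarrow> p Q2 \<ge> p Q1) \<and>
     (\<forall>Q1\<in>lists L. \<forall>Q2\<in>lists L. p (Q1 @ Q2) \<le> p Q1 + p Q2)"

definition p_MU :: "'i set \<Rightarrow> ('i \<Rightarrow> 'o) list \<Rightarrow> real" where
  "p_MU I Q = log 2 (real (card (query_partition I Q)))"

end

theory Submission
  imports Defs
begin

lemma card_qp:
  fixes Q :: "('i \<Rightarrow> 'o) list"
  shows "card (query_partition I Q) = card (bundle_eval Q ` I)"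
proof -
  define e where "e = bundle_eval Q"
  define h where "h = (\<lambda>v. {D\<in>I. e D = v})"
  define R where "R = {(D, D'). D \<in> I \<and> D' \<in> I \<and> e D = e D'}"
  have cls: "R `` {x} = h (e x)" if "x \<in> I" for x
    using that unfolding R_def h_def by auto
  have q: "query_partition I Q = h ` (e ` I)"
  proof -
    have "query_partition I Q = I // R" unfolding query_partition_def R_def e_def by simp
    also have "\<dots> = (\<lambda>x. R `` {x}) ` I" unfolding quotient_def by blast
    also have "\<dots> = (\<lambda>x. h (e x)) ` I" using cls by (intro image_cong) auto
    also have "\<dots> = h ` (e ` I)" by (simp add: image_image)
    finally show ?thesis .
  qed
  have "inj_on h (e ` I)"
    by (rule inj_onI) (auto simp: h_def set_eq_iff)
  then show ?thesis using q card_image e_def by metis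
qed

lemma log_card_mono:
  assumes "finite B" "A = {} \<longleftrightarrow> B = {}" "card A \<le> card B"
  shows "log 2 (real (card A)) \<le> log 2 (real (card B))"
proof (cases "A = {}")
  case True then show ?thesis using assms by simp
next
  case False
  then have "B \<noteq> {}" using assms by auto
  then have "card B > 0" using assms by (simp add: card_gt_0_iff)
  show ?thesis
  proof (cases "card A = 0")
    case True then show ?thesis using \<open>card B > 0\<close> by (simp add: log_def)
  next
    case False then show ?thesis using assms by simp
  qed
qed

theorem lemma21:
  fixes I :: "'i set" and L :: "('i \<Rightarrow> 'o) set"
  assumes "finite I"
  shows "arbitrage_free I L (p_MU I)"
  unfolding arbitrage_free_def p_MU_def card_qp
proof (intro conjI ballI impI)
  fix Q1 Q2 :: "('i \<Rightarrow> 'o) list"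
  assume h: "\<forall>D'\<in>I. \<forall>D''\<in>I. bundle_eval Q2 D' = bundle_eval Q2 D'' \<longrightarrow>
              bundle_eval Q1 D' = bundle_eval Q1 D''"
  define g where "g = (\<lambda>v. bundle_eval Q1 (SOME D. D \<in> I \<and> bundle_eval Q2 D = v))"
  have "bundle_eval Q1 ` I = g ` (bundle_eval Q2 ` I)"
  proof (rule set_eqI, rule iffI)
    fix x assume "x \<in> bundle_eval Q1 ` I"
    then obtain D where D: "D \<in> I" "x = bundle_eval Q1 D" by auto
    have "\<exists>D'. D' \<in> I \<and> bundle_eval Q2 D' = bundle_eval Q2 D" using D by blast
    then have s: "(SOME D'. D' \<in> I \<and> bundle_eval Q2 D' = bundle_eval Q2 D) \<in> I \<and>
       bundle_eval Q2 (SOME D'. D' \<in> I \<and> bundle_eval Q2 D' = bundle_eval Q2 D) = bundle_eval Q2 D"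
      by (rule someI_ex)
    have "g (bundle_eval Q2 D) = x" unfolding g_def using h s D by metis
    then show "x \<in> g ` (bundle_eval Q2 ` I)" using D by blast
  next
    fix x assume "x \<in> g ` (bundle_eval Q2 ` I)"
    then obtain D where D: "D \<in> I" "x = g (bundle_eval Q2 D)" by auto
    have "\<exists>D'. D' \<in> I \<and> bundle_eval Q2 D' = bundle_eval Q2 D" using D by blast
    then have s: "(SOME D'. D' \<in> I \<and> bundle_eval Q2 D' = bundle_eval Q2 D) \<in> I"
      by (metis (mono_tags, lifting) someI_ex)
    then show "x \<in> bundle_eval Q1 ` I" unfolding D g_def by blast
  qed
  then have "card (bundle_eval Q1 ` I) \<le> card (bundle_eval Q2 ` I)"
    using card_image_le assms by (metis finite_imageI)
  then show "log 2 (real (card (bundle_eval Q1 ` I))) \<le> log 2 (real (card (bundle_eval Q2 ` I)))"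
    using assms by (intro log_card_mono) auto
next
  fix Q1 Q2 :: "('i \<Rightarrow> 'o) list"
  let ?A = "bundle_eval Q1 ` I" and ?B = "bundle_eval Q2 ` I" and ?C = "bundle_eval (Q1 @ Q2) ` I"
  show "log 2 (real (card ?C)) \<le> log 2 (real (card ?A)) + log 2 (real (card ?B))"
  proof (cases "I = {}")
    case True then show ?thesis by (simp add: log_def)
  next
    case False
    have sub: "?C \<subseteq> (\<lambda>(a,b). a @ b) ` (?A \<times> ?B)"
      by (auto simp: bundle_eval_def)
    have fin: "finite (?A \<times> ?B)" using assms by simp
    have "card ?C \<le> card ((\<lambda>(a,b). a @ b) ` (?A \<times> ?B))"
      using sub fin by (intro card_mono) auto
    also have "\<dots> \<le> card (?A \<times> ?B)" by (rule card_image_le[OF fin])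
    also have "\<dots> = card ?A * card ?B" by (rule card_cartesian_product)
    finally have le: "card ?C \<le> card ?A * card ?B" .
    have pa: "card ?A > 0" "card ?B > 0" "card ?C > 0"
      using False assms by (auto simp: card_gt_0_iff)
    have "log 2 (real (card ?C)) \<le> log 2 (real (card ?A) * real (card ?B))"
      using le pa by (subst log_le_cancel_iff) (auto simp flip: of_nat_mult)
    also have "\<dots> = log 2 (real (card ?A)) + log 2 (real (card ?B))"
      using pa by (simp add: log_mult)
    finally show ?thesis .
  qed
qed

end
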